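(* Let $n\geq3$ be an odd integer, and for $\rho\in[\frac12,1)$ let $W_\rho(z)=\rho z^{n-2}\frac{(z+1)(z-\rho^{-1})}{(z-1)(z+\rho)}$ and $$f(\rho)=\int_{\mathbb{C}}\frac{dx\,dy}{(1+|z|^2)^2}\,\frac{1}{(1+|W_\rho(z)|^2)^2}\left|\frac{\partial W_\rho}{\partial\rho}(z)\right|^2,\qquad z=x+iy.$$ Then there exist $C>0$ and $\rho_*\in(0,1)$ such that for all $\rho\in(\rho_*,1)$, $f(\rho)<C\left[1+\log\left(\frac{1}{1-\rho}\right)\right]$. *)

theory Defs
  imports "HOL-Analysis.Analysis"
begin

definition W :: "nat \<Rightarrow> real \<Rightarrow> complex \<Rightarrow> complex" where
  "W n \<rho> z = of_real \<rho> * z ^ (n - 2) * ((z + 1) * (z - of_real (1 / \<rho>)))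
               / ((z - 1) * (z + of_real \<rho>))"

definition dW :: "nat \<Rightarrow> real \<Rightarrow> complex \<Rightarrow> complex" where
  "dW n \<rho> z = vector_derivative (\<lambda>r. W n r z) (at \<rho>)"

definition f :: "nat \<Rightarrow> real \<Rightarrow> ennreal" where
  "f n \<rho> = (\<integral>\<^sup>+ z. ennreal (1 / (1 + (cmod z)\<^sup>2)\<^sup>2 * (1 / (1 + (cmod (W n \<rho> z))\<^sup>2)\<^sup>2)
                 * (cmod (dW n \<rho> z))\<^sup>2) \<partial>lborel)"

end

theory Submission
  imports Defs
begin

lemma W_alt:
  assumes "r \<noteq> 0"
  shows "W n r z = z^(n-2) * (z+1) * (of_real r * z - 1) / ((z-1) * (z + of_real r))"
proof -
  have "of_real r * (z - of_real (1/r)) = of_real r * z - (1::complex)"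
    using assms by (simp add: algebra_simps of_real_def)
  then show ?thesis unfolding W_def by (simp add: mult.assoc mult.left_commute)
qed

lemma dW_formula:
  assumes "\<rho> > 0" "z \<noteq> 1" "z \<noteq> - of_real \<rho>"
  shows "dW n \<rho> z = z^(n-2) * (z+1) * (z^2+1) / ((z-1) * (z + of_real \<rho>)^2)"
proof -
  define c where "c = z^(n-2) * (z+1) / (z-1)"
  define w0 where "w0 = (of_real \<rho> :: complex)"
  define G where "G = (\<lambda>w::complex. c * ((w * z - 1) / (z + w)))"
  have nz: "z + w0 \<noteq> 0" using assms(3) unfolding w0_def by (auto simp: eq_neg_iff_add_eq_0)
  have nz1: "z - 1 \<noteq> 0" using assms(2) by simp
  have d1: "((\<lambda>w. w * z - 1) has_field_derivative z) (at w0)"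
    using DERIV_diff[OF DERIV_cmult_right[OF DERIV_ident, of z] DERIV_const[of 1]] by simp
  have d2: "((\<lambda>w. z + w) has_field_derivative 1) (at w0)"
    using DERIV_add[OF DERIV_const[of z] DERIV_ident] by simp
  have d3: "((\<lambda>w. (w * z - 1) / (z + w)) has_field_derivative
              ((z * (z + w0) - (w0 * z - 1) * 1) / ((z + w0) * (z + w0)))) (at w0)"
    by (rule DERIV_divide[OF d1 d2 nz])
  have eqD: "c * ((z * (z + w0) - (w0 * z - 1) * 1) / ((z + w0) * (z + w0)))
           = z^(n-2) * (z+1) * (z^2+1) / ((z-1) * (z + w0)^2)"
  proof -
    have "z * (z + w0) - (w0 * z - 1) * 1 = z^2 + 1" by (simp add: algebra_simps power2_eq_square)
    then show ?thesis unfolding c_def by (simp add: power2_eq_square)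
  qed
  have "(G has_field_derivative (z^(n-2) * (z+1) * (z^2+1) / ((z-1) * (z + w0)^2))) (at w0)"
    unfolding G_def eqD[symmetric] by (rule DERIV_cmult[OF d3])
  then have "((G \<circ> complex_of_real) has_vector_derivative (1 * (z^(n-2) * (z+1) * (z^2+1) / ((z-1) * (z + w0)^2)))) (at \<rho>)"
    unfolding w0_def by (intro field_vector_diff_chain_at) (auto intro: has_vector_derivative_of_real derivative_eq_intros)
  then have der: "((G \<circ> complex_of_real) has_vector_derivative (z^(n-2) * (z+1) * (z^2+1) / ((z-1) * (z + w0)^2))) (at \<rho>)"
    by (simp only: mult_1)
  have eqG: "\<And>y. y \<in> {0<..} \<Longrightarrow> (G \<circ> complex_of_real) y = W n y z"
  proof -
    fix y :: real assume "y \<in> {0<..}"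
    then have "W n y z = z^(n-2) * (z+1) * (of_real y * z - 1) / ((z-1) * (z + of_real y))"
      by (intro W_alt) auto
    then show "(G \<circ> complex_of_real) y = W n y z"
      unfolding comp_def G_def c_def by (simp only: times_divide_times_eq)
  qed
  have "((\<lambda>r. W n r z) has_vector_derivative (z^(n-2) * (z+1) * (z^2+1) / ((z-1) * (z + w0)^2))) (at \<rho>)"
    by (rule has_vector_derivative_transform_within_open[OF der open_greaterThan]) (use assms(1) eqG in auto)
  then show ?thesis unfolding dW_def w0_def by (rule vector_derivative_at)
qed

lemma dW_one: "dW n \<rho> 1 = 0"
  unfolding dW_def W_def by simp


lemma p_le_a: "cmod D / (1 + (cmod V)^2) \<le> cmod D"
  by (simp add: divide_le_eq) (smt (verit) mult_le_cancel_left1 norm_ge_zero zero_le_power2)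

lemma p_le_E: assumes "D = V * E" shows "cmod D / (1 + (cmod V)^2) \<le> cmod E / 2"
proof -
  have "2 * (cmod V * cmod E) \<le> cmod E * (1 + (cmod V)^2)"
  proof -
    have "0 \<le> cmod E * (1 - cmod V)^2" by simp
    then show ?thesis by (simp add: power2_eq_square algebra_simps)
  qed
  then show ?thesis using assms by (simp add: norm_mult divide_simps add_pos_nonneg)
qed

lemma p_le_F: assumes "D = V^2 * F" shows "cmod D / (1 + (cmod V)^2) \<le> cmod F"
proof -
  have "(cmod V)^2 * cmod F \<le> cmod F * (1 + (cmod V)^2)" by (simp add: algebra_simps)
  then show ?thesis using assms by (simp add: norm_mult norm_power divide_simps add_pos_nonneg)
qed

lemma E_id:
  fixes x t a b c :: complex
  assumes "a \<noteq> 0" "b \<noteq> 0" "c \<noteq> 0"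
  shows "x * t / (a * b^2) = (x * c / (a * b)) * (t / (c * b))"
  using assms by (simp add: field_simps power2_eq_square)

lemma F_id:
  fixes q p t a b c :: complex
  assumes "a \<noteq> 0" "b \<noteq> 0" "c \<noteq> 0" "q \<noteq> 0" "p \<noteq> 0"
  shows "q * p * t / (a * b^2) = (q * p * c / (a * b))^2 * (t * a / (q * p * c^2))"
  using assms by (simp add: field_simps power2_eq_square)


lemma regionA:
  fixes z :: complex and r :: real
  assumes n3: "3 \<le> n" and r1: "3/4 \<le> r" and r2: "r < 1" and zA: "cmod (z+1) < 1/2"
      and zr: "z \<noteq> - of_real r"
  shows "cmod (z^(n-2)*(z+1)*(z^2+1)/((z-1)*(z + of_real r)^2))
           / (1 + (cmod (z^(n-2)*(z+1)*(of_real r * z - 1)/((z-1)*(z + of_real r))))^2)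
         \<le> 10*2^(n-2) / max ((1-r)/2) (cmod (z + of_real r))"
    (is "?p \<le> _")
proof -
  define e where "e = 1 - r"
  have e0: "0 < e" "e \<le> 1/4" using r1 r2 by (auto simp: e_def)
  have "\<bar>Re (z+1)\<bar> \<le> cmod (z+1)" by (rule abs_Re_le_cmod)
  then have Rez: "Re z < -1/2" using zA by simp
  have "cmod z \<le> cmod (z+1) + cmod (-1::complex)"
    using norm_triangle_ineq[of "z+1" "-1"] by simp
  then have z1: "cmod z \<le> 3/2" using zA by simp
  have "cmod (1::complex) \<le> cmod (z+1) + cmod (-z)"
    using norm_triangle_ineq[of "z+1" "-z"] by simp
  then have z2: "cmod z \<ge> 1/2" using zA by simp
  have "\<bar>Re (of_real r * z - 1)\<bar> \<le> cmod (of_real r * z - 1)" by (rule abs_Re_le_cmod)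
  moreover have "r * Re z < 0" using r1 Rez by (simp add: mult_pos_neg)
  ultimately have Q: "cmod (of_real r * z - 1) \<ge> 1" by simp
  have "cmod (z^2+1) \<le> cmod (z^2) + cmod (1::complex)" by (rule norm_triangle_ineq)
  moreover have "cmod (z^2) \<le> (3/2)^2" unfolding norm_power using z1 by (intro power_mono) auto
  moreover have "(3/2::real)^2 = 9/4" by (simp add: power2_eq_square)
  ultimately have T: "cmod (z^2+1) \<le> 4" by simp
  have "cmod (z - 1) \<le> cmod (z+1) + cmod (-2::complex)"
    using norm_triangle_ineq[of "z+1" "-2"] by simp
  then have R1: "cmod (z - 1) \<le> 5/2" using zA by simp
  have nz1: "z - 1 \<noteq> 0" using Rez by auto
  have nz2: "z + of_real r \<noteq> 0" using zr by (auto simp: eq_neg_iff_add_eq_0)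
  have nz3: "of_real r * z - 1 \<noteq> 0" using Q by auto
  have S0: "cmod (z + of_real r) > 0" using nz2 by simp
  have K1: "(1::real) \<le> 2^(n-2)" by simp
  have triang: "e \<le> cmod (z+1) + cmod (z + of_real r)"
  proof -
    have "cmod (of_real e :: complex) = cmod ((z+1) - (z + of_real r))" by (simp add: e_def)
    also have "\<dots> \<le> cmod (z+1) + cmod (z + of_real r)" by (rule norm_triangle_ineq4)
    finally show ?thesis using e0 by simp
  qed
  show ?thesis
  proof (cases "cmod (z + of_real r) \<ge> e/2")
    case True
    have "?p \<le> cmod ((z^2+1) / ((of_real r * z - 1) * (z + of_real r))) / 2"
      by (rule p_le_E, rule E_id) (use nz1 nz2 nz3 in auto)
    also have "\<dots> = cmod (z^2+1) / (cmod (of_real r * z - 1) * cmod (z + of_real r)) / 2"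
      by (simp add: norm_mult norm_divide)
    also have "\<dots> \<le> 4 / (1 * cmod (z + of_real r)) / 2"
      by (intro divide_right_mono frac_le mult_right_mono) (use T Q S0 in auto)
    also have "\<dots> \<le> 10*2^(n-2) / cmod (z + of_real r)"
      using S0 apply (simp add: divide_simps) using K1 by linarith
    also have "\<dots> = 10*2^(n-2) / max ((1-r)/2) (cmod (z + of_real r))"
      using True by (simp add: e_def max_def)
    finally show ?thesis .
  next
    case False
    have P: "cmod (z+1) > e/2" using False triang by simp
    have nz4: "z + 1 \<noteq> 0" using P e0 by auto
    have nz5: "z^(n-2) \<noteq> 0" using z2 by auto
    have "?p \<le> cmod ((z^2+1) * (z-1) / (z^(n-2) * (z+1) * (of_real r * z - 1)^2))"
      by (rule p_le_F, rule F_id) (use nz1 nz2 nz3 nz4 nz5 in auto)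
    also have "\<dots> = cmod (z^2+1) * cmod (z-1) / (cmod z ^(n-2) * cmod (z+1) * cmod (of_real r * z - 1)^2)"
      by (simp add: norm_mult norm_divide norm_power)
    also have "\<dots> \<le> (4 * (5/2)) / ((1/2)^(n-2) * (e/2) * 1^2)"
    proof -
      have a: "(1/2::real)^(n-2) \<le> cmod z ^ (n-2)" by (intro power_mono) (use z2 in auto)
      have b: "(1::real)^2 \<le> cmod (of_real r * z - 1)^2" by (intro power_mono) (use Q in auto)
      show ?thesis
        by (intro frac_le mult_mono a b) (use T R1 P Q e0 in auto)
    qed
    also have "\<dots> = 10*2^(n-2) / (e/2)"
      by (simp add: power_one_over divide_simps)
    also have "\<dots> = 10*2^(n-2) / max ((1-r)/2) (cmod (z + of_real r))"
      using False by (simp add: e_def max_def)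
    finally show ?thesis .
  qed
qed


lemma regionB:
  fixes z :: complex and r :: real
  assumes n3: "3 \<le> n" and r1: "3/4 \<le> r" and r2: "r < 1" and zB: "cmod (z-1) < 1/2"
      and z1: "z \<noteq> 1"
  shows "cmod (z^(n-2)*(z+1)*(z^2+1)/((z-1)*(z + of_real r)^2))
           / (1 + (cmod (z^(n-2)*(z+1)*(of_real r * z - 1)/((z-1)*(z + of_real r))))^2)
         \<le> 10*2^(n-2) / max ((1-r)/2) (cmod (z - of_real (1/r)))"
    (is "?p \<le> _")
proof -
  define e where "e = 1 - r"
  have e0: "0 < e" "e \<le> 1/4" using r1 r2 by (auto simp: e_def)
  have "\<bar>Re (z-1)\<bar> \<le> cmod (z-1)" by (rule abs_Re_le_cmod)
  then have Rez: "Re z > 1/2" using zB by simp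
  have "cmod z \<le> cmod (z-1) + cmod (1::complex)"
    using norm_triangle_ineq[of "z-1" "1"] by simp
  then have zb: "cmod z \<le> 3/2" using zB by simp
  have "\<bar>Re (z + of_real r)\<bar> \<le> cmod (z + of_real r)" by (rule abs_Re_le_cmod)
  then have S: "cmod (z + of_real r) \<ge> 1" using Rez r1 by simp
  have "cmod (z^2+1) \<le> cmod (z^2) + cmod (1::complex)" by (rule norm_triangle_ineq)
  moreover have "cmod (z^2) \<le> (3/2)^2" unfolding norm_power using zb by (intro power_mono) auto
  moreover have "(3/2::real)^2 = 9/4" by (simp add: power2_eq_square)
  ultimately have T: "cmod (z^2+1) \<le> 4" by simp
  have "cmod (z + 1) \<le> cmod (z-1) + cmod (2::complex)"
    using norm_triangle_ineq[of "z-1" "2"] by (simp add: add.commute)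
  then have P: "cmod (z + 1) \<le> 5/2" using zB by simp
  have r0: "r > 0" using r1 by simp
  have Qeq: "cmod (of_real r * z - 1) = r * cmod (z - of_real (1/r))"
  proof -
    have "of_real r * z - 1 = of_real r * (z - of_real (1/r))" using r0
      by (simp add: algebra_simps of_real_def)
    then show ?thesis using r0 by (simp add: norm_mult)
  qed
  have d: "1/r - 1 \<ge> e"
  proof -
    have "0 \<le> (1-r)*(1-r)" by simp
    then have "r*2 \<le> 1 + r*r" by (simp add: algebra_simps)
    then show ?thesis using r0 unfolding e_def by (simp add: field_simps)
  qed
  have triang: "1/r - 1 \<le> cmod (z - 1) + cmod (z - of_real (1/r))"
  proof -
    have "1/r - 1 = cmod (of_real (1/r - 1) :: complex)"
      using d e0 by (simp only: norm_of_real)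
    also have "\<dots> = cmod ((z - 1) - (z - of_real (1/r)))" by simp
    also have "\<dots> \<le> cmod (z - 1) + cmod (z - of_real (1/r))" by (rule norm_triangle_ineq4)
    finally show ?thesis .
  qed
  have nz1: "z - 1 \<noteq> 0" using z1 by auto
  have nz2: "z + of_real r \<noteq> 0" using S by auto
  have K1: "(1::real) \<le> 2^(n-2)" by simp
  show ?thesis
  proof (cases "cmod (z - of_real (1/r)) \<ge> e/2")
    case True
    have V0: "cmod (z - of_real (1/r)) > 0" using True e0 by linarith
    have nz3: "of_real r * z - 1 \<noteq> 0" using Qeq V0 r0 by auto
    have "?p \<le> cmod ((z^2+1) / ((of_real r * z - 1) * (z + of_real r))) / 2"
      by (rule p_le_E, rule E_id) (use nz1 nz2 nz3 in auto)
    also have "\<dots> = cmod (z^2+1) / (cmod (of_real r * z - 1) * cmod (z + of_real r)) / 2"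
      by (simp add: norm_mult norm_divide)
    also have "\<dots> \<le> 4 / ((3/4 * cmod (z - of_real (1/r))) * 1) / 2"
      by (intro divide_right_mono frac_le mult_mono) (use T Qeq S V0 r1 in auto)
    also have "\<dots> \<le> 10*2^(n-2) / cmod (z - of_real (1/r))"
      using V0 apply (simp add: divide_simps) using K1 by linarith
    also have "\<dots> = 10*2^(n-2) / max ((1-r)/2) (cmod (z - of_real (1/r)))"
      using True by (simp add: e_def max_def)
    finally show ?thesis .
  next
    case False
    have R1: "cmod (z - 1) > e/2" using False triang d by simp
    have "?p \<le> cmod (z^(n-2)*(z+1)*(z^2+1)/((z-1)*(z + of_real r)^2))"
      by (rule p_le_a)
    also have "\<dots> = cmod z ^(n-2) * cmod (z+1) * cmod (z^2+1) / (cmod (z-1) * cmod (z + of_real r)^2)"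
      by (simp add: norm_mult norm_divide norm_power)
    also have "\<dots> \<le> (2^(n-2) * (5/2) * 4) / ((e/2) * 1^2)"
    proof -
      have a: "cmod z ^ (n-2) \<le> (2::real)^(n-2)" by (intro power_mono) (use zb in auto)
      have b: "(1::real)^2 \<le> cmod (z + of_real r)^2" by (intro power_mono) (use S in auto)
      show ?thesis
        by (intro frac_le mult_mono a b) (use T R1 P e0 in auto)
    qed
    also have "\<dots> = 10*2^(n-2) / (e/2)"
      by (simp add: divide_simps)
    also have "\<dots> = 10*2^(n-2) / max ((1-r)/2) (cmod (z - of_real (1/r)))"
      using False by (simp add: e_def max_def)
    finally show ?thesis .
  qed
qed


lemma regionC:
  fixes z :: complex and r :: real
  assumes r1: "3/4 \<le> r" and r2: "r < 1" and zA: "cmod (z+1) \<ge> 1/2" and zB: "cmod (z-1) \<ge> 1/2"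
  shows "cmod (z^(n-2)*(z+1)*(z^2+1)/((z-1)*(z + of_real r)^2))
           / (1 + (cmod (z^(n-2)*(z+1)*(of_real r * z - 1)/((z-1)*(z + of_real r))))^2)
         \<le> 272"
    (is "?p \<le> _")
proof -
  define e where "e = 1 - r"
  have e0: "0 < e" "e \<le> 1/4" using r1 r2 by (auto simp: e_def)
  define m where "m = cmod z"
  define Q where "Q = cmod (of_real r * z - 1)"
  define S where "S = cmod (z + of_real r)"
  have S1: "S \<ge> 1/4"
  proof -
    have "cmod (z+1) = cmod ((z + of_real r) + of_real e)" by (simp add: e_def)
    also have "\<dots> \<le> S + cmod (of_real e :: complex)" unfolding S_def by (rule norm_triangle_ineq)
    finally show ?thesis using zA e0 by simp
  qed
  have S2: "S \<ge> m - 1"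
  proof -
    have "m = cmod ((z + of_real r) - of_real r)" by (simp add: m_def)
    also have "\<dots> \<le> S + cmod (of_real r :: complex)" unfolding S_def by (rule norm_triangle_ineq4)
    finally show ?thesis using r1 r2 by simp
  qed
  have Q1: "Q \<ge> 1/8"
  proof -
    have eq: "(of_real r * z - 1) + of_real e = of_real r * (z - 1)" by (simp add: e_def algebra_simps)
    have "r * cmod (z - 1) = cmod ((of_real r * z - 1) + of_real e)"
      unfolding eq using r1 by (simp add: norm_mult)
    also have "\<dots> \<le> Q + cmod (of_real e :: complex)" unfolding Q_def by (rule norm_triangle_ineq)
    finally have "r * cmod (z - 1) \<le> Q + e" using e0 by simp
    moreover have "3/4 * (1/2) \<le> r * cmod (z - 1)" using r1 zB by (intro mult_mono) auto
    ultimately show ?thesis using e0 by simp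
  qed
  have Q2: "Q \<ge> r * m - 1"
  proof -
    have "r * m = cmod ((of_real r * z - 1) + 1)"
      using r1 by (simp add: m_def norm_mult)
    also have "\<dots> \<le> Q + cmod (1 :: complex)" unfolding Q_def by (rule norm_triangle_ineq)
    finally show ?thesis by simp
  qed
  have T: "cmod (z^2+1) \<le> m^2 + 1"
  proof -
    have "cmod (z^2+1) \<le> cmod (z^2) + cmod (1::complex)" by (rule norm_triangle_ineq)
    then show ?thesis by (simp add: m_def norm_power)
  qed
  have key: "cmod (z^2+1) \<le> 544 * (Q * S)"
  proof (cases "m < 4")
    case True
    have "m^2 \<le> 4^2" using True by (intro power_mono) (auto simp: m_def)
    then have "cmod (z^2+1) \<le> 17" using T by simp
    moreover have "1/8 * (1/4) \<le> Q * S" using Q1 S1 by (intro mult_mono) auto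
    ultimately show ?thesis by simp
  next
    case False
    have "3/4 * m \<le> r * m" using r1 False by (intro mult_right_mono) auto
    then have "m/2 \<le> Q" using Q2 False by linarith
    moreover have "3/4 * m \<le> S" using S2 False by simp
    ultimately have "m/2 * (3/4 * m) \<le> Q * S" using False by (intro mult_mono) auto
    moreover have "m^2 + 1 \<le> 2 * m^2"
    proof -
      have "1 * 1 \<le> m * m" using False by (intro mult_mono) auto
      then show ?thesis by (simp add: power2_eq_square)
    qed
    ultimately show ?thesis using T by (simp add: power2_eq_square)
  qed
  have nz1: "z - 1 \<noteq> 0" using zB by auto
  have nz2: "z + of_real r \<noteq> 0" using S1 S_def by auto
  have nz3: "of_real r * z - 1 \<noteq> 0" using Q1 Q_def by auto
  have "?p \<le> cmod ((z^2+1) / ((of_real r * z - 1) * (z + of_real r))) / 2"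
    by (rule p_le_E, rule E_id) (use nz1 nz2 nz3 in auto)
  also have "\<dots> = cmod (z^2+1) / (Q * S) / 2"
    by (simp add: norm_mult norm_divide Q_def S_def)
  also have "\<dots> \<le> 272"
    using key Q1 S1 by (simp add: divide_simps)
  finally show ?thesis .
qed


lemma four_pow: "(4::real)^m = (2^m)^2"
  by (simp add: power2_eq_square flip: power_mult_distrib)

lemma inv_half_pow_sq: "1/(1/2^m)^2 = (4::real)^m"
  by (simp add: four_pow power_one_over)

lemma dyadic_aux:
  fixes d :: real
  assumes "0 \<le> d" "d < 1"
  shows "1/(max (1/2^N) d)^2 \<le> (\<Sum>k\<le>N. 4^(k+1) * (if d < 1/2^k then 1 else 0))"
proof (induction N)
  case 0
  then show ?case using assms by (simp add: max_def)
next
  case (Suc N)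
  define F where "F = (\<lambda>k. (4::real)^(k+1) * (if d < 1/2^k then 1 else 0))"
  have nn: "\<And>k. 0 \<le> F k" by (simp add: F_def)
  have IH: "1/(max (1/2^N) d)^2 \<le> sum F {..N}" using Suc.IH by (simp add: F_def)
  have mono: "sum F {..N} \<le> sum F {..Suc N}"
    by (rule sum_mono2) (use nn in auto)
  have termN: "F N \<le> sum F {..Suc N}"
    by (rule member_le_sum) (use nn in auto)
  have termSN: "F (Suc N) \<le> sum F {..Suc N}"
    by (rule member_le_sum) (use nn in auto)
  have "1/(max (1/2^(Suc N)) d)^2 \<le> sum F {..Suc N}"
  proof -
    consider "d \<ge> 1/2^N" | "1/2^(Suc N) \<le> d \<and> d < 1/2^N" | "d < 1/2^(Suc N)" by linarith
    then show ?thesis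
    proof cases
      case 1
      have "1/2^(Suc N) \<le> (1/2^N::real)" by (rule divide_left_mono) auto
      then have "1/2^(Suc N) \<le> d" using 1 by linarith
      then have "max (1/2^(Suc N)) d = max (1/2^N) d" using 1 by (simp add: max_def)
      then show ?thesis using IH mono by simp
    next
      case 2
      have "(0::real) < 1/2^(Suc N)" by simp
      then have d0: "d > 0" using 2 by linarith
      have "1/(max (1/2^(Suc N)) d)^2 = 1/d^2" using 2 by (simp add: max_def)
      also have "\<dots> \<le> 1/(1/2^(Suc N))^2" using 2 d0 by (intro divide_left_mono power_mono mult_pos_pos) auto
      also have "\<dots> = 4^(N+1)" by (simp only: inv_half_pow_sq) simp
      also have "\<dots> = F N" using 2 by (simp add: F_def)
      finally show ?thesis using termN by simp
    next
      case 3
      have "1/(max (1/2^(Suc N)) d)^2 = 1/(1/2^(Suc N))^2" using 3 by (simp add: max_def)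
      also have "\<dots> = 4^(N+1)" by (simp only: inv_half_pow_sq) simp
      also have "\<dots> \<le> F (Suc N)" using 3 by (simp add: F_def)
      finally show ?thesis using termSN by simp
    qed
  qed
  then show ?case by (simp add: F_def)
qed

lemma dyadic:
  fixes d \<delta> :: real
  assumes "0 \<le> d" "d < 1" "0 < \<delta>" "1/2^N \<le> \<delta>"
  shows "1/(max \<delta> d)^2 \<le> (\<Sum>k\<le>N. 4^(k+1) * (if d < 1/2^k then 1 else 0))"
proof -
  have h1: "0 < max (1/2^N) d" by (simp add: less_max_iff_disj)
  have h2: "0 < max \<delta> d" using assms by (simp add: less_max_iff_disj)
  have "1/(max \<delta> d)^2 \<le> 1/(max (1/2^N) d)^2"
  proof (rule divide_left_mono)
    show "(max (1/2^N) d)^2 \<le> (max \<delta> d)^2" using assms h1 by (intro power_mono) auto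
    show "0 < (max \<delta> d)^2 * (max (1/2^N) d)^2" using h1 h2 by simp
  qed simp
  then show ?thesis using dyadic_aux[OF assms(1,2), of N] by linarith
qed


lemma ind_ball: "indicator (ball c e) z = (if cmod (z - c) < e then 1 else (0::real))"
  by (simp add: indicator_def dist_norm norm_minus_commute)

lemma sq_bound:
  fixes p K m :: real
  assumes "p \<le> K / m" "0 \<le> p"
  shows "p^2 \<le> K^2 * (1/m^2)"
proof -
  have "p^2 \<le> (K/m)^2" using assms by (intro power_mono) auto
  then show ?thesis by (simp add: power_divide)
qed

lemma pointwise:
  fixes z :: complex and r :: real
  assumes n3: "3 \<le> n" and r1: "3/4 \<le> r" and r2: "r < 1" and zr: "z \<noteq> - of_real r"
      and N: "1/2^N \<le> (1-r)/2"
  shows "1/(1+(cmod z)^2)^2 * (1/(1+(cmod (W n r z))^2)^2) * (cmod (dW n r z))^2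
    \<le> (10*2^(n-2))^2 * (\<Sum>k\<le>N. 4^(k+1) * indicator (ball (- of_real r) (1/2^k)) z)
    + (10*2^(n-2))^2 * (\<Sum>k\<le>N. 4^(k+1) * indicator (ball (of_real (1/r)) (1/2^k)) z)
    + 272^2 * (1/(1+(cmod z)^2)^2)"
proof -
  define K :: real where "K = 10*2^(n-2)"
  define G where "G = 1/(1+(cmod z)^2)^2"
  define A1 where "A1 = (\<Sum>k\<le>N. 4^(k+1) * indicator (ball (- of_real r) (1/2^k)) z :: real)"
  define A2 where "A2 = (\<Sum>k\<le>N. 4^(k+1) * indicator (ball (of_real (1/r)) (1/2^k)) z :: real)"
  have A1: "A1 \<ge> 0" unfolding A1_def by (intro sum_nonneg) auto
  have A2: "A2 \<ge> 0" unfolding A2_def by (intro sum_nonneg) auto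
  have G0: "G \<ge> 0" "G \<le> 1" unfolding G_def by (auto simp: divide_simps)
  have r0: "r > 0" using r1 by simp
  have e0: "0 < (1-r)/2" using r2 by simp
  show ?thesis
  proof (cases "z = 1")
    case True
    have l0: "1/(1+(cmod z)^2)^2 * (1/(1+(cmod (W n r z))^2)^2) * (cmod (dW n r z))^2 = 0"
      using True by (simp add: dW_one)
    have "0 \<le> K^2*A1 + K^2*A2 + 272^2*G" using A1 A2 G0 by simp
    then show ?thesis unfolding l0 K_def A1_def A2_def G_def .
  next
    case False
    define Dz where "Dz = z^(n-2)*(z+1)*(z^2+1)/((z-1)*(z + of_real r)^2)"
    define Wz where "Wz = z^(n-2)*(z+1)*(of_real r * z - 1)/((z-1)*(z + of_real r))"
    have dWe: "dW n r z = Dz" unfolding Dz_def by (rule dW_formula) (use r0 False zr in auto)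
    have We: "W n r z = Wz" unfolding Wz_def using r0 by (intro W_alt) auto
    define p where "p = cmod Dz / (1 + (cmod Wz)^2)"
    have p0: "p \<ge> 0" unfolding p_def by simp
    have LHS: "1/(1+(cmod z)^2)^2 * (1/(1+(cmod (W n r z))^2)^2) * (cmod (dW n r z))^2 = G * p^2"
      unfolding dWe We p_def G_def by (simp add: power_divide)
    have Gp: "G * p^2 \<le> p^2" using G0 by (simp add: mult_left_le_one_le)
    consider "cmod (z+1) < 1/2" | "cmod (z-1) < 1/2" | "cmod (z+1) \<ge> 1/2 \<and> cmod (z-1) \<ge> 1/2" by linarith
    then have "G * p^2 \<le> K^2 * A1 + K^2 * A2 + 272^2 * G"
    proof cases
      case 1
      define d where "d = cmod (z + of_real r)"
      have eq: "z + of_real r = (z+1) + of_real (r-1)" by simp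
      have h: "cmod (of_real (r - 1) :: complex) = 1 - r" unfolding norm_of_real using r2 by simp
      have "d \<le> cmod (z+1) + cmod (of_real (r - 1) :: complex)"
        unfolding d_def eq by (rule norm_triangle_ineq)
      then have d1: "d < 1" using 1 r1 r2 h by simp
      have "p \<le> K / max ((1-r)/2) d"
        unfolding p_def Dz_def Wz_def K_def d_def by (rule regionA) (use n3 r1 r2 1 zr in auto)
      then have "p^2 \<le> K^2 * (1/(max ((1-r)/2) d)^2)" using p0 by (rule sq_bound)
      also have "\<dots> \<le> K^2 * A1"
      proof (rule mult_left_mono)
        have "1/(max ((1-r)/2) d)^2 \<le> (\<Sum>k\<le>N. 4^(k+1) * (if d < 1/2^k then 1 else 0))"
          by (rule dyadic) (use d1 e0 N in \<open>auto simp: d_def\<close>)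
        also have "\<dots> = A1" unfolding A1_def ind_ball d_def by simp
        finally show "1/(max ((1-r)/2) d)^2 \<le> A1" .
      qed simp
      moreover have "0 \<le> K^2 * A2" using A2 by simp
      moreover have "0 \<le> 272^2 * G" using G0 by simp
      ultimately show ?thesis using Gp by linarith
    next
      case 2
      define d where "d = cmod (z - of_real (1/r))"
      have eq: "z - of_real (1/r) = (z-1) + of_real (1 - 1/r)" by simp
      have a: "1/r - 1 \<le> 1/3" using r1 r0 by (simp add: field_simps)
      have b: "1/r - 1 \<ge> 0" using r2 r0 by (simp add: field_simps)
      have h: "cmod (of_real (1 - 1/r) :: complex) = 1/r - 1" unfolding norm_of_real using b by simp
      have "d \<le> cmod (z-1) + cmod (of_real (1 - 1/r) :: complex)"
        unfolding d_def eq by (rule norm_triangle_ineq)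
      then have d1: "d < 1" using 2 a h by simp
      have "p \<le> K / max ((1-r)/2) d"
        unfolding p_def Dz_def Wz_def K_def d_def by (rule regionB) (use n3 r1 r2 2 False in auto)
      then have "p^2 \<le> K^2 * (1/(max ((1-r)/2) d)^2)" using p0 by (rule sq_bound)
      also have "\<dots> \<le> K^2 * A2"
      proof (rule mult_left_mono)
        have "1/(max ((1-r)/2) d)^2 \<le> (\<Sum>k\<le>N. 4^(k+1) * (if d < 1/2^k then 1 else 0))"
          by (rule dyadic) (use d1 e0 N in \<open>auto simp: d_def\<close>)
        also have "\<dots> = A2" unfolding A2_def ind_ball d_def by simp
        finally show "1/(max ((1-r)/2) d)^2 \<le> A2" .
      qed simp
      moreover have "0 \<le> K^2 * A1" using A1 by simp
      moreover have "0 \<le> 272^2 * G" using G0 by simp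
      ultimately show ?thesis using Gp by linarith
    next
      case 3
      have "p \<le> 272"
        unfolding p_def Dz_def Wz_def by (rule regionC) (use r1 r2 3 in auto)
      then have "p^2 \<le> 272^2" using p0 by (intro power_mono) auto
      then have "G * p^2 \<le> 272^2 * G" using G0 by (simp add: mult_left_mono mult.commute)
      moreover have "0 \<le> K^2 * A1" using A1 by simp
      moreover have "0 \<le> K^2 * A2" using A2 by simp
      ultimately show ?thesis by linarith
    qed
    then show ?thesis unfolding LHS K_def A1_def A2_def G_def .
  qed
qed


abbreviation "U \<equiv> unit_ball_vol (real DIM(complex))"

lemma U_pos: "U > 0" by simp

lemma ball_meas: "r \<ge> 0 \<Longrightarrow> emeasure lborel (ball (c::complex) r) = ennreal (U * r^2)"
  by (subst emeasure_ball) auto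

lemma ball_sets[measurable]: "ball (c::'a::euclidean_space) r \<in> sets borel"
  by (simp add: borel_open)

lemma int_dyadic:
  fixes c :: complex
  shows "(\<integral>\<^sup>+z. ennreal (\<Sum>k\<le>N. 4^(k+1) * indicator (ball c (1/2^k)) z) \<partial>lborel) = ennreal (4 * U * (N+1))"
proof -
  have eq: "\<And>z. ennreal (\<Sum>k\<le>N. 4^(k+1) * indicator (ball c (1/2^k)) z)
      = (\<Sum>k\<le>N. ennreal (4^(k+1)) * indicator (ball c (1/2^k)) z)"
    by (subst sum_ennreal[symmetric]) (auto simp: ennreal_mult' ennreal_indicator)
  have "(\<integral>\<^sup>+z. ennreal (\<Sum>k\<le>N. 4^(k+1) * indicator (ball c (1/2^k)) z) \<partial>lborel)
      = (\<Sum>k\<le>N. \<integral>\<^sup>+z. ennreal (4^(k+1)) * indicator (ball c (1/2^k)) z \<partial>lborel)"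
    unfolding eq by (rule nn_integral_sum) measurable
  also have "\<dots> = (\<Sum>k\<le>N. ennreal (4^(k+1)) * ennreal (U * (1/2^k)^2))"
    by (intro sum.cong refl, subst nn_integral_cmult_indicator) (auto simp: ball_meas)
  also have "\<dots> = (\<Sum>k\<le>N. ennreal (4 * U))"
  proof (intro sum.cong refl)
    fix k assume "k \<in> {..N}"
    have "(4::real)^(k+1) * (U * (1/2^k)^2) = 4 * U"
      by (simp add: power_one_over power2_eq_square flip: power_mult_distrib)
    then show "ennreal (4^(k+1)) * ennreal (U * (1/2^k)^2) = ennreal (4 * U)"
      by (simp flip: ennreal_mult)
  qed
  also have "\<dots> = of_nat (Suc N) * ennreal (4 * U)" by simp
  also have "\<dots> = ennreal (real (Suc N)) * ennreal (4 * U)" by (simp only: ennreal_of_nat_eq_real_of_nat)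
  also have "\<dots> = ennreal (real (Suc N) * (4 * U))" by (rule ennreal_mult[symmetric]) auto
  also have "\<dots> = ennreal (4 * U * (N+1))" by (simp add: algebra_simps)
  finally show ?thesis .
qed


lemma glob_real:
  fixes z :: complex
  shows "cmod z < 2^j \<Longrightarrow> 1/(1+(cmod z)^2)^2 \<le> (\<Sum>k\<le>j. 16/16^k * indicator (ball 0 (2^k)) z :: real)"
proof (induction j)
  case 0
  then have "indicator (ball 0 1) z = (1::real)" by (simp add: indicator_def)
  moreover have "1/(1+(cmod z)^2)^2 \<le> (1::real)" by (simp add: divide_simps)
  ultimately show ?case by simp
next
  case (Suc j)
  define F where "F = (\<lambda>k. 16/16^k * indicator (ball 0 (2^k)) z :: real)"
  have nn: "\<And>k. 0 \<le> F k" by (simp add: F_def)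
  have mono: "sum F {..j} \<le> sum F {..Suc j}" by (rule sum_mono2) (use nn in auto)
  have termSj: "F (Suc j) \<le> sum F {..Suc j}" by (rule member_le_sum) (use nn in auto)
  show ?case
  proof (cases "cmod z < 2^j")
    case True
    have "1/(1+(cmod z)^2)^2 \<le> sum F {..j}" using Suc.IH[OF True] by (simp only: F_def)
    then have "1/(1+(cmod z)^2)^2 \<le> sum F {..Suc j}" using mono by linarith
    then show ?thesis by (simp only: F_def)
  next
    case False
    define m where "m = cmod z"
    have m1: "2^j \<le> m" using False by (simp add: m_def)
    have m0: "0 < m" using m1 by (smt (verit) zero_less_power)
    have e16: "(((2::real)^j)^2)^2 = 16^j"
      by (simp add: power2_eq_square flip: power_mult_distrib)
    have a1: "0 < 1 + m^2" using m0 by (simp add: add_pos_nonneg)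
    have "1/(1+m^2)^2 \<le> 1/(m^2)^2"
    proof (rule divide_left_mono)
      show "(m^2)^2 \<le> (1+m^2)^2" by (intro power_mono) auto
      show "0 < (1+m^2)^2 * (m^2)^2" using a1 m0 by (intro mult_pos_pos) auto
    qed simp
    also have "\<dots> \<le> 1/((2^j)^2)^2"
    proof (rule divide_left_mono)
      show "(((2::real)^j)^2)^2 \<le> (m^2)^2" using m1 by (intro power_mono) auto
      show "0 < (m^2)^2 * (((2::real)^j)^2)^2" using m0 by (intro mult_pos_pos) auto
    qed simp
    also have "1/(((2::real)^j)^2)^2 = 16/16^(Suc j)" unfolding e16 by simp
    also have "\<dots> = F (Suc j)" using Suc.prems by (simp add: F_def indicator_def)
    finally have "1/(1+m^2)^2 \<le> sum F {..Suc j}" using termSj by linarith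
    then show ?thesis by (simp only: F_def m_def)
  qed
qed


lemma glob_int:
  "(\<integral>\<^sup>+z. ennreal (1/(1+(cmod z)^2)^2) \<partial>lborel) \<le> ennreal (\<Sum>k. 16 * U * (1/4::real)^k)"
proof -
  have pw: "ennreal (1/(1+(cmod z)^2)^2) \<le> (\<Sum>k. ennreal (16/16^k) * indicator (ball 0 (2^k)) z)"
    for z :: complex
  proof -
    obtain j where j: "cmod z < 2^j" using real_arch_pow[of 2 "cmod z"] by auto
    have "ennreal (1/(1+(cmod z)^2)^2) \<le> ennreal (\<Sum>k\<le>j. 16/16^k * indicator (ball 0 (2^k)) z)"
      using glob_real[OF j] by (rule ennreal_leI)
    also have "\<dots> = (\<Sum>k\<le>j. ennreal (16/16^k * indicator (ball 0 (2^k)) z))"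
      by (rule sum_ennreal[symmetric]) simp
    also have "\<dots> = (\<Sum>k\<le>j. ennreal (16/16^k) * indicator (ball 0 (2^k)) z)"
      by (intro sum.cong refl) (simp add: indicator_def)
    also have "\<dots> \<le> (\<Sum>k. ennreal (16/16^k) * indicator (ball 0 (2^k)) z)"
      by (rule sum_le_suminf[OF summableI]) auto
    finally show ?thesis .
  qed
  have "(\<integral>\<^sup>+z. ennreal (1/(1+(cmod z)^2)^2) \<partial>lborel)
      \<le> (\<integral>\<^sup>+z. (\<Sum>k. ennreal (16/16^k) * indicator (ball (0::complex) (2^k)) z) \<partial>lborel)"
    by (rule nn_integral_mono) (rule pw)
  also have "\<dots> = (\<Sum>k. \<integral>\<^sup>+z. ennreal (16/16^k) * indicator (ball (0::complex) (2^k)) z \<partial>lborel)"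
    by (rule nn_integral_suminf) measurable
  also have "\<dots> = (\<Sum>k. ennreal (16 * U * (1/4)^k))"
  proof (rule suminf_cong)
    fix k :: nat
    have a: "(16::real)^k = 4^k * 4^k" by (simp flip: power_mult_distrib)
    have b: "((2::real)^k)^2 = 4^k" by (simp add: power2_eq_square flip: power_mult_distrib)
    have "16/16^k * (U * ((2::real)^k)^2) = 16 * U * (1/4)^k"
      unfolding a b by (simp add: power_one_over field_simps)
    then show "(\<integral>\<^sup>+z. ennreal (16/16^k) * indicator (ball (0::complex) (2^k)) z \<partial>lborel) = ennreal (16 * U * (1/4)^k)"
      by (subst nn_integral_cmult_indicator) (auto simp: ball_meas simp flip: ennreal_mult)
  qed
  also have "\<dots> = ennreal (\<Sum>k. 16 * U * (1/4)^k)"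
    by (rule suminf_ennreal2) (auto intro!: summable_mult summable_geometric)
  finally show ?thesis .
qed


lemma int_const_mult:
  assumes "g \<in> borel_measurable lborel" "c \<ge> 0" "\<And>z. g z \<ge> 0"
  shows "(\<integral>\<^sup>+z. ennreal (c * g z) \<partial>lborel) = ennreal c * (\<integral>\<^sup>+z. ennreal (g z) \<partial>lborel)"
proof -
  have "(\<integral>\<^sup>+z. ennreal (c * g z) \<partial>lborel) = (\<integral>\<^sup>+z. ennreal c * ennreal (g z) \<partial>lborel)"
    using assms by (intro nn_integral_cong) (simp add: ennreal_mult)
  also have "\<dots> = ennreal c * (\<integral>\<^sup>+z. ennreal (g z) \<partial>lborel)"
    using assms(1) by (intro nn_integral_cmult) simp
  finally show ?thesis .
qed

theorem lemma6p3:
  fixes n :: nat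
  assumes "odd n" and "n \<ge> 3"
  shows "\<exists>C::real. C > 0 \<and> (\<exists>\<rho>s::real. 0 < \<rho>s \<and> \<rho>s < 1 \<and>
           (\<forall>\<rho>. \<rho>s < \<rho> \<and> \<rho> < 1 \<and> 1/2 \<le> \<rho> \<longrightarrow>
              f n \<rho> < ennreal (C * (1 + ln (1 / (1 - \<rho>))))))"
proof -
  define K :: real where "K = 10*2^(n-2)"
  define I0 where "I0 = (\<Sum>k. 16 * U * (1/4::real)^k)"
  have summ: "summable (\<lambda>k. 16 * U * (1/4::real)^k)" by (intro summable_mult summable_geometric) auto
  have I0nn: "I0 \<ge> 0" unfolding I0_def using summ by (intro suminf_nonneg) auto
  have Unn: "U \<ge> 0" using U_pos by linarith
  define C where "C = 24 * K^2 * U + 272^2 * I0 + 1"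
  have C0: "C > 0"
  proof -
    have "0 \<le> 24*K^2*U" using Unn by simp
    moreover have "0 \<le> 272^2*I0" using I0nn by simp
    ultimately show ?thesis unfolding C_def by linarith
  qed
  have main: "f n \<rho> < ennreal (C * (1 + ln (1 / (1 - \<rho>))))" if r: "3/4 < \<rho>" "\<rho> < 1" for \<rho>
  proof -
    define e where "e = 1 - \<rho>"
    have e0: "0 < e" "e < 1/4" using r by (auto simp: e_def)
    define L where "L = ln (1/e)"
    have L0: "L \<ge> 0" unfolding L_def using e0 by simp
    define x where "x = log 2 (2/e)"
    define N where "N = nat \<lceil>x\<rceil>"
    have x1: "x \<ge> 1" unfolding x_def using e0 by (simp add: le_log_iff field_simps)
    have Nx: "real N \<ge> x" unfolding N_def by linarith
    have Nx2: "real N < x + 1" unfolding N_def using x1 by linarith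
    have "2/e = 2 powr x" unfolding x_def using e0 by simp
    also have "\<dots> \<le> 2 powr (real N)" using Nx by (intro powr_mono) auto
    also have "\<dots> = 2^N" by (simp add: powr_realpow)
    finally have "2/e \<le> 2^N" .
    then have N1: "1/2^N \<le> (1-\<rho>)/2" using e0 unfolding e_def[symmetric] by (simp add: field_simps)
    have "x = (ln 2 + L) / ln 2" unfolding x_def L_def log_def using e0
      by (simp add: ln_div)
    also have "\<dots> = 1 + L / ln 2" by (simp add: field_simps)
    also have "\<dots> \<le> 1 + L / (2/3)" using L0 ln2_ge_two_thirds by (intro add_left_mono divide_left_mono) auto
    finally have "x \<le> 1 + 3/2 * L" by simp
    then have "real N + 1 < 3 + 3/2 * L" using Nx2 by linarith
    then have N2: "real N + 1 \<le> 3 * (1 + L)" using L0 by (simp add: algebra_simps)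
    define A1 where "A1 = (\<lambda>z::complex. (\<Sum>k\<le>N. 4^(k+1) * indicator (ball (- of_real \<rho>) (1/2^k)) z :: real))"
    define A2 where "A2 = (\<lambda>z::complex. (\<Sum>k\<le>N. 4^(k+1) * indicator (ball (of_real (1/\<rho>)) (1/2^k)) z :: real))"
    define G where "G = (\<lambda>z::complex. 1/(1+(cmod z)^2)^2)"
    have A1nn: "\<And>z. A1 z \<ge> 0" unfolding A1_def by (intro sum_nonneg) auto
    have A2nn: "\<And>z. A2 z \<ge> 0" unfolding A2_def by (intro sum_nonneg) auto
    have Gnn: "\<And>z. G z \<ge> 0" unfolding G_def by simp
    have AE: "AE z in lborel.
        ennreal (1/(1+(cmod z)^2)^2 * (1/(1+(cmod (W n \<rho> z))^2)^2) * (cmod (dW n \<rho> z))^2)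
        \<le> ennreal (K^2 * A1 z) + ennreal (K^2 * A2 z) + ennreal (272^2 * G z)"
      using AE_lborel_singleton[of "- of_real \<rho> :: complex"]
    proof eventually_elim
      case (elim z)
      have "1/(1+(cmod z)^2)^2 * (1/(1+(cmod (W n \<rho> z))^2)^2) * (cmod (dW n \<rho> z))^2
          \<le> K^2 * A1 z + K^2 * A2 z + 272^2 * G z"
        unfolding K_def A1_def A2_def G_def
        by (rule pointwise) (use assms(2) r elim N1 in auto)
      then have "ennreal (1/(1+(cmod z)^2)^2 * (1/(1+(cmod (W n \<rho> z))^2)^2) * (cmod (dW n \<rho> z))^2)
          \<le> ennreal (K^2 * A1 z + K^2 * A2 z + 272^2 * G z)" by (rule ennreal_leI)
      also have "\<dots> = ennreal (K^2 * A1 z) + ennreal (K^2 * A2 z) + ennreal (272^2 * G z)"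
        using A1nn[of z] A2nn[of z] Gnn[of z] by (simp add: ennreal_plus[symmetric] del: ennreal_plus)
      finally show ?case .
    qed
    have mA1: "A1 \<in> borel_measurable lborel" unfolding A1_def by measurable
    have mA2: "A2 \<in> borel_measurable lborel" unfolding A2_def by measurable
    have mG: "G \<in> borel_measurable lborel" unfolding G_def by measurable
    have iA1: "(\<integral>\<^sup>+z. ennreal (A1 z) \<partial>lborel) = ennreal (4 * U * (N+1))"
      unfolding A1_def by (rule int_dyadic)
    have iA2: "(\<integral>\<^sup>+z. ennreal (A2 z) \<partial>lborel) = ennreal (4 * U * (N+1))"
      unfolding A2_def by (rule int_dyadic)
    have iG: "(\<integral>\<^sup>+z. ennreal (G z) \<partial>lborel) \<le> ennreal I0"
      unfolding G_def I0_def by (rule glob_int)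
    have "f n \<rho> \<le> (\<integral>\<^sup>+z. ennreal (K^2 * A1 z) + ennreal (K^2 * A2 z) + ennreal (272^2 * G z) \<partial>lborel)"
      unfolding f_def by (rule nn_integral_mono_AE[OF AE])
    also have "\<dots> = (\<integral>\<^sup>+z. ennreal (K^2 * A1 z) \<partial>lborel) + (\<integral>\<^sup>+z. ennreal (K^2 * A2 z) \<partial>lborel)
                    + (\<integral>\<^sup>+z. ennreal (272^2 * G z) \<partial>lborel)"
      using mA1 mA2 mG by (simp add: nn_integral_add)
    also have "\<dots> = ennreal (K^2) * ennreal (4 * U * (N+1)) + ennreal (K^2) * ennreal (4 * U * (N+1))
                    + ennreal (272^2) * (\<integral>\<^sup>+z. ennreal (G z) \<partial>lborel)"
      using mA1 mA2 mG A1nn A2nn Gnn iA1 iA2 by (simp add: int_const_mult)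
    also have "\<dots> \<le> ennreal (K^2) * ennreal (4 * U * (N+1)) + ennreal (K^2) * ennreal (4 * U * (N+1))
                    + ennreal (272^2) * ennreal I0"
      using iG by (intro add_left_mono mult_left_mono) auto
    also have "\<dots> = ennreal (8 * K^2 * U * (N+1) + 272^2 * I0)"
    proof -
      define P where "P = K^2 * (4 * U * (N+1))"
      define Q where "Q = 272^2 * I0"
      have P0: "P \<ge> 0" unfolding P_def using Unn by simp
      have Q0: "Q \<ge> 0" unfolding Q_def using I0nn by simp
      have e1: "ennreal (K^2) * ennreal (4 * U * (N+1)) = ennreal P"
        unfolding P_def by (rule ennreal_mult[symmetric]) (use Unn in auto)
      have e2: "ennreal (272^2) * ennreal I0 = ennreal Q"
        unfolding Q_def by (rule ennreal_mult[symmetric]) (use I0nn in auto)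
      have s1: "ennreal P + ennreal P = ennreal (P + P)" by (rule ennreal_plus[symmetric]) (use P0 in auto)
      have s2: "ennreal (P + P) + ennreal Q = ennreal (P + P + Q)" by (rule ennreal_plus[symmetric]) (use P0 Q0 in auto)
      have s3: "P + P + Q = 8 * K^2 * U * (N+1) + 272^2 * I0" unfolding P_def Q_def by (simp add: algebra_simps)
      show ?thesis unfolding e1 e2 s1 s2 s3 ..
    qed
    also have "\<dots> < ennreal (C * (1 + L))"
    proof (rule ennreal_lessI)
      show "0 < C * (1 + L)" using C0 L0 by simp
      have "8 * K^2 * U * (N+1) \<le> 8 * K^2 * U * (3 * (1 + L))"
        using N2 Unn by (intro mult_left_mono) auto
      moreover have "272^2 * I0 \<le> 272^2 * I0 * (1 + L)" using I0nn L0 by (simp add: mult_le_cancel_left1)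
      moreover have "C * (1 + L) = 24 * K^2 * U * (1+L) + 272^2 * I0 * (1+L) + (1 + L)"
        unfolding C_def by (simp add: algebra_simps)
      ultimately show "8 * K^2 * U * (N+1) + 272^2 * I0 < C * (1 + L)" using L0 by (simp add: algebra_simps)
    qed
    finally show ?thesis unfolding L_def e_def .
  qed
  show ?thesis
    by (rule exI[of _ C], intro conjI C0 exI[of _ "3/4"]) (use main in auto)
qed


end
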